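(* Let $M$ be a multiagent model, let $h\cdot s$ be a history of $M$ (so $\mathit{last}(h)\,T\,s$), let $\vec r$ be a record tuple that stops at $h$, let $a\in\mathit{Ag}$, $o\in\mathit{Obs}$ and $k\in\mathbb N$. Then $$\mathit{KT}^k(h\cdot s,\vec r)=U_T^k\big(\mathit{KT}^k(h,\vec r),\,s,\,\vec o(h,\vec r)\big)\quad\text{and}\quad \mathit{KT}^k\big(h,\vec r\cdot(o,|h|-1)_a\big)=U_\Delta^k\big(\mathit{KT}^k(h,\vec r),\,o,\,a\big).$$
   Context: Fix a countably infinite set $\mathit{AP}$ of atomic propositions, a finite nonempty set $\mathit{Obs}$ of observations, and a finite set of agents $\mathit{Ag}=\{a_1,\dots,a_m\}$. For a word $w$ we write $w_i$ for its letter at position $i$ (positions start at $0$), $|w|$ for its length (finite words) and $\mathit{last}(w)$ for its last letter. A multiagent model is $M=(\mathit{AP}_f,S,T,V,\{\sim_o\}_{o\in\mathit{Obs}},s_\iota,\vec o_\iota)$ where $\mathit{AP}_f\subseteq\mathit{AP}$ is finite, $S$ is a finite set of states, $T\subseteq S\times S$ is left-total, $V:S\to2^{\mathit{AP}_f}$, each $\sim_o$ is an equivalence relation on $S$, $s_\iota\in S$, and $\vec o_\iota=(\vec o_{\iota,a})_{a\in\mathit{Ag}}\in\mathit{Obs}^{\mathit{Ag}}$ gives each agent an initial observation. Paths are infinite sequences of states $s_0s_1\dots$ with $s_iTs_{i+1}$ (starting anywhere); histories are finite nonempty prefixes of paths. For a tuple $\vec o$, $\vec o_a$ is its $a$-component,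 $\vec o_i=\vec o_{a_i}$. An observation record is a finite word over $\mathit{Obs}\times\mathbb N$; $r_{=n}$ is the subword of $r$ consisting of the pairs with second component $n$; $r$ stops at $n$ if $r_{=m}$ is empty for all $m>n$. A record tuple is $\vec r=(\vec r_a)_{a\in\mathit{Ag}}$ of observation records; $\vec r\cdot(o,n)_a$ is $\vec r$ with $\vec r_a$ replaced by $\vec r_a\cdot(o,n)$; $\vec r$ stops at a history $h$ if each $\vec r_a$ stops at $|h|-1$. For agent $a$: $\mathit{ol}_a(\vec r,0)=\vec o_{\iota,a}\cdot o_1\cdots o_k$ if $(\vec r_a)_{=0}=(o_1,0)\cdots(o_k,0)$, and $\mathit{ol}_a(\vec r,n+1)=\mathit{last}(\mathit{ol}_a(\vec r,n))\cdot o_1\cdots o_k$ if $(\vec r_a)_{=n+1}=(o_1,n+1)\cdots(o_k,n+1)$. Histories $h,h'$ are equivalent for $a$, $h\approx^{\vec r}_a h'$, if $|h|=|h'|$ and for all $i<|h|$ and all $o$ occurring in $\mathit{ol}_a(\vec r,i)$, $h_i\sim_o h'_i$. $\vec o(h,\vec r)$ is the tuple whose $a$-component is the last element of $\mathit{ol}_a(\vec r,|h|-1)$. $k$-trees: a $0$-tree is $\langle s,\emptyset,\dots,\emptyset\rangle$ with $s\in S$; a $(k+1)$-tree is $\langle s,F_1,\dots,F_m\rangle$ with $s\in S$ and each $F_i$ a set of $k$-trees. The root of $\tau=\langle s,F_1,\dots,F_m\rangle$ is $\mathit{root}(\tau)=s$, and $\tau(a_i)=F_i$. For a history $h$ and record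 tuple $\vec r$: $\mathit{KT}^0(h,\vec r)=\langle\mathit{last}(h),\emptyset,\dots,\emptyset\rangle$ and $\mathit{KT}^{k+1}(h,\vec r)=\langle\mathit{last}(h),F_1,\dots,F_m\rangle$ with $F_i=\{\mathit{KT}^k(h',\vec r)\mid h'\text{ a history with }h'\approx^{\vec r}_{a_i}h\}$. Updates: $U_T^0(\langle s,\emptyset,\dots,\emptyset\rangle,s',\vec o)=\langle s',\emptyset,\dots,\emptyset\rangle$; $U_T^{k+1}(\langle s,F_1,\dots,F_m\rangle,s',\vec o)=\langle s',F'_1,\dots,F'_m\rangle$ where $F'_i=\{U_T^k(\tau,s'',\vec o)\mid\tau\in F_i,\ s''\sim_{\vec o_i}s',\ \mathit{root}(\tau)\,T\,s''\}$. $U_\Delta^0(\langle s,\emptyset,\dots,\emptyset\rangle,o,a_i)=\langle s,\emptyset,\dots,\emptyset\rangle$; $U_\Delta^{k+1}(\langle s,F_1,\dots,F_m\rangle,o,a_i)=\langle s,F'_1,\dots,F'_m\rangle$ where $F'_j=\{U_\Delta^k(\tau,o,a_i)\mid\tau\in F_j\}$ for $j\ne i$ and $F'_i=\{U_\Delta^k(\tau,o,a_i)\mid\tau\in F_i,\ \mathit{root}(\tau)\sim_o s\}$. *)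

theory Defs
  imports Main "HOL-Library.FSet"
begin

text \<open>Agents are a_1..a_m, represented by the indices 0..<m (index i stands for a_(i+1)).
  Atomic propositions are represented by nat (a countably infinite set).\<close>

record ('s, 'o) mamodel =
  nagents :: nat
  Obs :: "'o set"
  APf :: "nat set"
  St :: "'s set"
  Tr :: "('s \<times> 's) set"
  Val :: "'s \<Rightarrow> nat set"
  obsrel :: "'o \<Rightarrow> ('s \<times> 's) set"
  init_state :: 's
  init_obs :: "nat \<Rightarrow> 'o"

definition wf_model :: "('s, 'o) mamodel \<Rightarrow> bool" where
  "wf_model M \<longleftrightarrow>
     finite (Obs M) \<and> Obs M \<noteq> {} \<and> finite (APf M) \<and> finite (St M) \<and>
     Tr M \<subseteq> St M \<times> St M \<and> (\<forall>s\<in>St M. \<exists>s'. (s, s') \<in> Tr M) \<and>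
     (\<forall>s\<in>St M. Val M s \<subseteq> APf M) \<and>
     (\<forall>ob\<in>Obs M. equiv (St M) (obsrel M ob)) \<and>
     init_state M \<in> St M \<and> (\<forall>i<nagents M. init_obs M i \<in> Obs M)"

definition is_history :: "('s, 'o) mamodel \<Rightarrow> 's list \<Rightarrow> bool" where
  "is_history M h \<longleftrightarrow> h \<noteq> [] \<and> set h \<subseteq> St M \<and>
     (\<forall>i. Suc i < length h \<longrightarrow> (h ! i, h ! Suc i) \<in> Tr M)"

type_synonym 'o obsrec = "('o \<times> nat) list"
type_synonym 'o rectuple = "nat \<Rightarrow> 'o obsrec"

definition rec_at :: "'o obsrec \<Rightarrow> nat \<Rightarrow> 'o obsrec" where
  "rec_at r n = filter (\<lambda>p. snd p = n) r"

definition rec_stops :: "'o obsrec \<Rightarrow> nat \<Rightarrow> bool" where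
  "rec_stops r n \<longleftrightarrow> (\<forall>m>n. rec_at r m = [])"

definition valid_rectuple :: "('s, 'o) mamodel \<Rightarrow> 'o rectuple \<Rightarrow> bool" where
  "valid_rectuple M r \<longleftrightarrow> (\<forall>a<nagents M. fst ` set (r a) \<subseteq> Obs M)"

definition tuple_stops_at :: "('s, 'o) mamodel \<Rightarrow> 'o rectuple \<Rightarrow> 's list \<Rightarrow> bool" where
  "tuple_stops_at M r h \<longleftrightarrow> (\<forall>a<nagents M. rec_stops (r a) (length h - 1))"

definition rec_snoc :: "'o rectuple \<Rightarrow> 'o \<Rightarrow> nat \<Rightarrow> nat \<Rightarrow> 'o rectuple" where
  "rec_snoc r ob n a = r(a := r a @ [(ob, n)])"

primrec ol :: "('s, 'o) mamodel \<Rightarrow> 'o rectuple \<Rightarrow> nat \<Rightarrow> nat \<Rightarrow> 'o list" where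
  "ol M r a 0 = init_obs M a # map fst (rec_at (r a) 0)"
| "ol M r a (Suc n) = last (ol M r a n) # map fst (rec_at (r a) (Suc n))"

definition hist_equiv :: "('s, 'o) mamodel \<Rightarrow> 'o rectuple \<Rightarrow> nat \<Rightarrow> 's list \<Rightarrow> 's list \<Rightarrow> bool" where
  "hist_equiv M r a h h' \<longleftrightarrow> length h = length h' \<and>
     (\<forall>i<length h. \<forall>ob\<in>set (ol M r a i). (h ! i, h' ! i) \<in> obsrel M ob)"

definition obs_vec :: "('s, 'o) mamodel \<Rightarrow> 's list \<Rightarrow> 'o rectuple \<Rightarrow> nat \<Rightarrow> 'o" where
  "obs_vec M h r = (\<lambda>a. last (ol M r a (length h - 1)))"

text \<open>Trees <s, F_1, ..., F_m>: the list has the m components F_1..F_m.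
  Over a finite state set all the sets F_i occurring are finite, hence fsets.\<close>
datatype 's ktree = Node 's "'s ktree fset list"

primrec root :: "'s ktree \<Rightarrow> 's" where
  "root (Node s Fs) = s"

primrec kids :: "'s ktree \<Rightarrow> 's ktree fset list" where
  "kids (Node s Fs) = Fs"

primrec KT :: "('s, 'o) mamodel \<Rightarrow> nat \<Rightarrow> 's list \<Rightarrow> 'o rectuple \<Rightarrow> 's ktree" where
  "KT M 0 h r = Node (last h) (replicate (nagents M) {||})"
| "KT M (Suc k) h r = Node (last h)
     (map (\<lambda>i. Abs_fset {KT M k h' r | h'. is_history M h' \<and> hist_equiv M r i h' h})
          [0..<nagents M])"

primrec UT :: "('s, 'o) mamodel \<Rightarrow> nat \<Rightarrow> 's ktree \<Rightarrow> 's \<Rightarrow> (nat \<Rightarrow> 'o) \<Rightarrow> 's ktree" where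
  "UT M 0 \<tau> s' ov = Node s' (replicate (nagents M) {||})"
| "UT M (Suc k) \<tau> s' ov = Node s'
     (map (\<lambda>i. Abs_fset {UT M k \<sigma> s'' ov | \<sigma> s''. \<sigma> |\<in>| kids \<tau> ! i \<and>
                 (s'', s') \<in> obsrel M (ov i) \<and> (root \<sigma>, s'') \<in> Tr M})
          [0..<nagents M])"

primrec UD :: "('s, 'o) mamodel \<Rightarrow> nat \<Rightarrow> 's ktree \<Rightarrow> 'o \<Rightarrow> nat \<Rightarrow> 's ktree" where
  "UD M 0 \<tau> ob a = Node (root \<tau>) (replicate (nagents M) {||})"
| "UD M (Suc k) \<tau> ob a = Node (root \<tau>)
     (map (\<lambda>j. if j = a
               then (\<lambda>\<sigma>. UD M k \<sigma> ob a) |`| ffilter (\<lambda>\<sigma>. (root \<sigma>, root \<tau>) \<in> obsrel M ob) (kids \<tau> ! j)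
               else (\<lambda>\<sigma>. UD M k \<sigma> ob a) |`| (kids \<tau> ! j))
          [0..<nagents M])"

end

theory Submission
  imports Defs
begin

lemma fin_KT:
  assumes "finite (St M)"
  shows "finite {KT M k h' r | h'. is_history M h' \<and> hist_equiv M r i h' h}"
proof -
  have "{KT M k h' r | h'. is_history M h' \<and> hist_equiv M r i h' h}
     \<subseteq> (\<lambda>h'. KT M k h' r) ` {h'. set h' \<subseteq> St M \<and> length h' = length h}"
    by (auto simp: is_history_def hist_equiv_def)
  moreover have "finite {h'. set h' \<subseteq> St M \<and> length h' = length h}"
    using finite_lists_length_eq[OF assms] by simp
  ultimately show ?thesis by (meson finite_surj)
qed

lemma fmem_Abs: "finite A \<Longrightarrow> (x |\<in>| Abs_fset A) = (x \<in> A)"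
  by (simp add: Abs_fset_inverse)

lemma ol_stop:
  assumes "tuple_stops_at M r h" "a < nagents M" "h \<noteq> []"
  shows "ol M r a (length h) = [last (ol M r a (length h - 1))]"
proof -
  have "rec_at (r a) (length h) = []"
    using assms unfolding tuple_stops_at_def rec_stops_def
    by (metis diff_less length_greater_0_conv less_numeral_extra(1))
  moreover have "length h = Suc (length h - 1)" using assms(3) by simp
  ultimately show ?thesis by (metis ol.simps(2) list.simps(8))
qed

lemma is_history_snoc:
  assumes "h' \<noteq> []" "Tr M \<subseteq> St M \<times> St M"
  shows "is_history M (h' @ [x]) \<longleftrightarrow> is_history M h' \<and> (last h', x) \<in> Tr M"
proof
  assume H: "is_history M (h' @ [x])"
  have step: "((h' @ [x]) ! i, (h' @ [x]) ! Suc i) \<in> Tr M" if "Suc i < Suc (length h')" for i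
    using H that unfolding is_history_def by simp
  have "(h' @ [x]) ! (length h' - 1) = last h'" using assms(1)
    by (simp add: last_conv_nth nth_append)
  moreover have "(h' @ [x]) ! Suc (length h' - 1) = x" using assms(1) by (simp add: nth_append)
  moreover have "Suc (length h' - 1) < Suc (length h')" using assms(1) by simp
  ultimately have "(last h', x) \<in> Tr M" using step by metis
  moreover have "is_history M h'"
  proof -
    have "\<forall>i. Suc i < length h' \<longrightarrow> (h' ! i, h' ! Suc i) \<in> Tr M"
    proof (intro allI impI)
      fix i assume i: "Suc i < length h'"
      then have "((h' @ [x]) ! i, (h' @ [x]) ! Suc i) \<in> Tr M" using step by simp
      then show "(h' ! i, h' ! Suc i) \<in> Tr M" using i by (simp add: nth_append)
    qed
    then show ?thesis using H assms(1) unfolding is_history_def by simp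
  qed
  ultimately show "is_history M h' \<and> (last h', x) \<in> Tr M" by simp
next
  assume H: "is_history M h' \<and> (last h', x) \<in> Tr M"
  have "x \<in> St M" using H assms(2) by auto
  moreover
  { fix i assume i: "Suc i < length (h' @ [x])"
    have "((h' @ [x]) ! i, (h' @ [x]) ! Suc i) \<in> Tr M"
    proof (cases "Suc i < length h'")
      case True then show ?thesis using H by (simp add: nth_append is_history_def)
    next
      case False
      then have "Suc i = length h'" using i by simp
      then have "i = length h' - 1" by simp
      then show ?thesis using H assms(1) \<open>Suc i = length h'\<close>
        by (simp add: nth_append last_conv_nth)
    qed }
  ultimately show "is_history M (h' @ [x])" using H unfolding is_history_def by auto
qed

lemma hist_equiv_snoc:
  assumes "tuple_stops_at M r h" "i < nagents M" "h \<noteq> []" "length h' = length h"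
  shows "hist_equiv M r i (h' @ [x]) (h @ [s]) \<longleftrightarrow>
     hist_equiv M r i h' h \<and> (x, s) \<in> obsrel M (obs_vec M h r i)"
proof -
  have ol: "set (ol M r i (length h)) = {obs_vec M h r i}"
    using ol_stop[OF assms(1-3)] by (simp add: obs_vec_def)
  have "hist_equiv M r i (h' @ [x]) (h @ [s]) \<longleftrightarrow>
     (\<forall>j<Suc (length h). \<forall>ob\<in>set (ol M r i j). ((h' @ [x]) ! j, (h @ [s]) ! j) \<in> obsrel M ob)"
    using assms(4) by (simp add: hist_equiv_def)
  also have "\<dots> \<longleftrightarrow> (\<forall>j<length h. \<forall>ob\<in>set (ol M r i j). ((h' @ [x]) ! j, (h @ [s]) ! j) \<in> obsrel M ob)
       \<and> (\<forall>ob\<in>set (ol M r i (length h)). ((h' @ [x]) ! length h, (h @ [s]) ! length h) \<in> obsrel M ob)"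
    by (auto simp: less_Suc_eq)
  also have "\<dots> \<longleftrightarrow> hist_equiv M r i h' h \<and> (x, s) \<in> obsrel M (obs_vec M h r i)"
    using assms(4) ol by (simp add: hist_equiv_def nth_append)
  finally show ?thesis .
qed

lemma obs_vec_len: "length h' = length h \<Longrightarrow> obs_vec M h' r = obs_vec M h r"
  by (simp add: obs_vec_def)

lemma part1:
  assumes wf: "wf_model M"
  shows "h \<noteq> [] \<Longrightarrow> is_history M (h @ [s]) \<Longrightarrow> tuple_stops_at M r h \<Longrightarrow>
    KT M k (h @ [s]) r = UT M k (KT M k h r) s (obs_vec M h r)"
proof (induction k arbitrary: h s)
  case 0
  then show ?case by simp
next
  case (Suc k)
  have finS: "finite (St M)" and TS: "Tr M \<subseteq> St M \<times> St M" using wf by (auto simp: wf_model_def)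
  have per: "Abs_fset {KT M k h' r |h'. is_history M h' \<and> hist_equiv M r i h' (h @ [s])} =
      Abs_fset {UT M k \<sigma> s'' (obs_vec M h r) |\<sigma> s''.
         \<sigma> |\<in>| kids (KT M (Suc k) h r) ! i \<and>
         (s'', s) \<in> obsrel M (obs_vec M h r i) \<and> (root \<sigma>, s'') \<in> Tr M}"
    if i: "i < nagents M" for i
  proof -
    let ?C = "{KT M k h' r | h'. is_history M h' \<and> hist_equiv M r i h' h}"
    have eq: "{KT M k h' r |h'. is_history M h' \<and> hist_equiv M r i h' (h @ [s])} =
      {UT M k \<sigma> s'' (obs_vec M h r) |\<sigma> s''. \<sigma> \<in> ?C \<and>
         (s'', s) \<in> obsrel M (obs_vec M h r i) \<and> (root \<sigma>, s'') \<in> Tr M}"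
    proof (intro set_eqI iffI)
      fix t assume "t \<in> {KT M k h' r |h'. is_history M h' \<and> hist_equiv M r i h' (h @ [s])}"
      then obtain h'' where t: "t = KT M k h'' r" and hh: "is_history M h''"
        and he: "hist_equiv M r i h'' (h @ [s])" by auto
      have "length h'' = Suc (length h)" using he by (simp add: hist_equiv_def)
      then obtain h' x where h'': "h'' = h' @ [x]" and lh: "length h' = length h"
        by (metis append_butlast_last_id length_butlast diff_Suc_1 list.size(3) nat.distinct(1))
      have ne: "h' \<noteq> []" using lh Suc.prems(1) by auto
      have A: "is_history M h'" "(last h', x) \<in> Tr M"
        using is_history_snoc[OF ne TS] hh h'' by auto
      have B: "hist_equiv M r i h' h" "(x, s) \<in> obsrel M (obs_vec M h r i)"
        using hist_equiv_snoc[OF Suc.prems(3) i Suc.prems(1) lh] he h'' by auto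
      have st: "tuple_stops_at M r h'" using Suc.prems(3) lh by (simp add: tuple_stops_at_def)
      have "t = UT M k (KT M k h' r) x (obs_vec M h r)"
        using Suc.IH[OF ne _ st] hh h'' t obs_vec_len[OF lh, of M r] by simp
      note tt = this
      have rt: "root (KT M k h' r) = last h'" by (cases k) auto
      have inC: "KT M k h' r \<in> ?C" using A B by auto
      show "t \<in> {UT M k \<sigma> s'' (obs_vec M h r) |\<sigma> s''. \<sigma> \<in> ?C \<and>
         (s'', s) \<in> obsrel M (obs_vec M h r i) \<and> (root \<sigma>, s'') \<in> Tr M}"
        unfolding mem_Collect_eq
        apply (rule exI[of _ "KT M k h' r"], rule exI[of _ x])
        using tt rt inC A B by simp
    next
      fix t assume "t \<in> {UT M k \<sigma> s'' (obs_vec M h r) |\<sigma> s''. \<sigma> \<in> ?C \<and>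
         (s'', s) \<in> obsrel M (obs_vec M h r i) \<and> (root \<sigma>, s'') \<in> Tr M}"
      then obtain \<sigma> x where t: "t = UT M k \<sigma> x (obs_vec M h r)" and sC: "\<sigma> \<in> ?C"
        and B0: "(x, s) \<in> obsrel M (obs_vec M h r i)" "(root \<sigma>, x) \<in> Tr M"
        by (auto simp only: mem_Collect_eq)
      from sC obtain h' where sg: "\<sigma> = KT M k h' r"
        and A0: "is_history M h'" "hist_equiv M r i h' h"
        by (auto simp only: mem_Collect_eq)
      have lh: "length h' = length h" using A0 by (simp add: hist_equiv_def)
      have ne: "h' \<noteq> []" using lh Suc.prems(1) by auto
      have rt: "root (KT M k h' r) = last h'" by (cases k) auto
      have hh: "is_history M (h' @ [x])" using is_history_snoc[OF ne TS] A0 B0 rt sg by auto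
      have he: "hist_equiv M r i (h' @ [x]) (h @ [s])"
        using hist_equiv_snoc[OF Suc.prems(3) i Suc.prems(1) lh] A0 B0 by auto
      have st: "tuple_stops_at M r h'" using Suc.prems(3) lh by (simp add: tuple_stops_at_def)
      have "t = KT M k (h' @ [x]) r"
        using Suc.IH[OF ne hh st] t sg obs_vec_len[OF lh, of M r] by simp
      then show "t \<in> {KT M k h' r |h'. is_history M h' \<and> hist_equiv M r i h' (h @ [s])}"
        using hh he by blast
    qed
    have fC: "finite ?C" by (rule fin_KT[OF finS])
    have kd: "kids (KT M (Suc k) h r) ! i = Abs_fset ?C" using i by simp
    have "{UT M k \<sigma> s'' (obs_vec M h r) |\<sigma> s''. \<sigma> |\<in>| Abs_fset ?C \<and>
         (s'', s) \<in> obsrel M (obs_vec M h r i) \<and> (root \<sigma>, s'') \<in> Tr M}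
      = {UT M k \<sigma> s'' (obs_vec M h r) |\<sigma> s''. \<sigma> \<in> ?C \<and>
         (s'', s) \<in> obsrel M (obs_vec M h r i) \<and> (root \<sigma>, s'') \<in> Tr M}"
      by (simp only: fmem_Abs[OF fC])
    then show "Abs_fset {KT M k h' r |h'. is_history M h' \<and> hist_equiv M r i h' (h @ [s])} =
      Abs_fset {UT M k \<sigma> s'' (obs_vec M h r) |\<sigma> s''.
         \<sigma> |\<in>| kids (KT M (Suc k) h r) ! i \<and>
         (s'', s) \<in> obsrel M (obs_vec M h r i) \<and> (root \<sigma>, s'') \<in> Tr M}"
      unfolding kd using eq by (simp only:)
  qed
  have L: "KT M (Suc k) (h @ [s]) r = Node s (map (\<lambda>i. Abs_fset {KT M k h' r |h'. is_history M h' \<and> hist_equiv M r i h' (h @ [s])}) [0..<nagents M])"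
    by (simp only: KT.simps(2)[of M k "h @ [s]"] last_snoc)
  have R: "UT M (Suc k) (KT M (Suc k) h r) s (obs_vec M h r) = Node s (map (\<lambda>i. Abs_fset {UT M k \<sigma> s'' (obs_vec M h r) |\<sigma> s''.
         \<sigma> |\<in>| kids (KT M (Suc k) h r) ! i \<and>
         (s'', s) \<in> obsrel M (obs_vec M h r i) \<and> (root \<sigma>, s'') \<in> Tr M}) [0..<nagents M])"
    by (simp only: UT.simps(2))
  define F where "F = (\<lambda>i. Abs_fset {KT M k h' r |h'. is_history M h' \<and> hist_equiv M r i h' (h @ [s])})"
  define G where "G = (\<lambda>i. Abs_fset {UT M k \<sigma> s'' (obs_vec M h r) |\<sigma> s''.
         \<sigma> |\<in>| kids (KT M (Suc k) h r) ! i \<and>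
         (s'', s) \<in> obsrel M (obs_vec M h r i) \<and> (root \<sigma>, s'') \<in> Tr M})"
  have per': "F i = G i" if "i < nagents M" for i
    unfolding F_def G_def using per[OF that] by (simp only:)
  have mp: "map F [0..<nagents M] = map G [0..<nagents M]"
    by (rule map_cong[OF refl]) (simp add: per')
  have L': "KT M (Suc k) (h @ [s]) r = Node s (map F [0..<nagents M])" unfolding F_def by (rule L)
  have R': "UT M (Suc k) (KT M (Suc k) h r) s (obs_vec M h r) = Node s (map G [0..<nagents M])"
    unfolding G_def by (rule R)
  show ?case unfolding L' R' mp ..
qed


lemma fimage_Abs: "finite C \<Longrightarrow> f |`| Abs_fset C = Abs_fset (f ` C)"
  by (rule fset_inject[THEN iffD1]) (simp add: Abs_fset_inverse fimage.rep_eq)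

lemma ffilter_Abs: "finite C \<Longrightarrow> ffilter P (Abs_fset C) = Abs_fset {x\<in>C. P x}"
  by (rule fset_inject[THEN iffD1]) (auto simp add: Abs_fset_inverse ffilter.rep_eq)

lemma ol_other: "b \<noteq> a \<Longrightarrow> ol M (rec_snoc r ob n a) b m = ol M r b m"
  by (induction m) (simp_all add: rec_snoc_def)

lemma rec_at_snoc_ne: "m \<noteq> n \<Longrightarrow> rec_at (xs @ [(ob, n)]) m = rec_at xs m"
  by (simp add: rec_at_def)

lemma ol_before: "m < n \<Longrightarrow> ol M (rec_snoc r ob n a) a m = ol M r a m"
  by (induction m) (simp_all add: rec_snoc_def rec_at_snoc_ne)

lemma ol_at: "set (ol M (rec_snoc r ob n a) a n) = insert ob (set (ol M r a n))"
proof (cases n)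
  case 0 then show ?thesis by (auto simp: rec_snoc_def rec_at_def)
next
  case (Suc m)
  then have "ol M (rec_snoc r ob n a) a m = ol M r a m" by (simp add: ol_before)
  then show ?thesis using Suc by (auto simp: rec_snoc_def rec_at_def)
qed

lemma hist_equiv_other: "b \<noteq> a \<Longrightarrow> hist_equiv M (rec_snoc r ob n a) b h' h = hist_equiv M r b h' h"
  by (simp add: hist_equiv_def ol_other)

lemma hist_equiv_a:
  assumes "length h' = length h" "length h = Suc n"
  shows "hist_equiv M (rec_snoc r ob n a) a h' h \<longleftrightarrow>
     hist_equiv M r a h' h \<and> (last h', last h) \<in> obsrel M ob"
proof -
  have ne: "h' \<noteq> []" "h \<noteq> []" using assms by auto
  have lst: "h' ! n = last h'" "h ! n = last h" using assms ne
    by (auto simp: last_conv_nth)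
  have "hist_equiv M (rec_snoc r ob n a) a h' h \<longleftrightarrow>
     (\<forall>j<n. \<forall>o'\<in>set (ol M (rec_snoc r ob n a) a j). (h' ! j, h ! j) \<in> obsrel M o') \<and>
     (\<forall>o'\<in>set (ol M (rec_snoc r ob n a) a n). (h' ! n, h ! n) \<in> obsrel M o')"
    using assms by (auto simp: hist_equiv_def less_Suc_eq)
  also have "\<dots> \<longleftrightarrow> (\<forall>j<n. \<forall>o'\<in>set (ol M r a j). (h' ! j, h ! j) \<in> obsrel M o') \<and>
     (\<forall>o'\<in>set (ol M r a n). (h' ! n, h ! n) \<in> obsrel M o') \<and> (h' ! n, h ! n) \<in> obsrel M ob"
    by (auto simp: ol_before ol_at)
  also have "\<dots> \<longleftrightarrow> hist_equiv M r a h' h \<and> (last h', last h) \<in> obsrel M ob"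
    using assms lst by (auto simp: hist_equiv_def less_Suc_eq)
  finally show ?thesis .
qed

lemma root_KT: "root (KT M k h r) = last h"
  by (cases k) auto

lemma part2:
  assumes finS: "finite (St M)"
  shows "length h = Suc n \<Longrightarrow> KT M k h (rec_snoc r ob n a) = UD M k (KT M k h r) ob a"
proof (induction k arbitrary: h)
  case 0
  then show ?case by simp
next
  case (Suc k)
  let ?r' = "rec_snoc r ob n a"
  define F where "F = (\<lambda>i. Abs_fset {KT M k h' ?r' |h'. is_history M h' \<and> hist_equiv M ?r' i h' h})"
  define G where "G = (\<lambda>j. if j = a
               then (\<lambda>\<sigma>. UD M k \<sigma> ob a) |`| ffilter (\<lambda>\<sigma>. (root \<sigma>, root (KT M (Suc k) h r)) \<in> obsrel M ob) (kids (KT M (Suc k) h r) ! j)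
               else (\<lambda>\<sigma>. UD M k \<sigma> ob a) |`| (kids (KT M (Suc k) h r) ! j))"
  have per: "F j = G j" if j: "j < nagents M" for j
  proof -
    let ?C = "{KT M k h' r | h'. is_history M h' \<and> hist_equiv M r j h' h}"
    have fC: "finite ?C" by (rule fin_KT[OF finS])
    have kd: "kids (KT M (Suc k) h r) ! j = Abs_fset ?C" using j by simp
    have IH: "KT M k h' ?r' = UD M k (KT M k h' r) ob a" if "hist_equiv M r' j h' h" for h' r'
      using that Suc.IH Suc.prems by (simp add: hist_equiv_def)
    show ?thesis
    proof (cases "j = a")
      case True
      have G: "G j = Abs_fset ((\<lambda>\<sigma>. UD M k \<sigma> ob a) ` {\<sigma>\<in>?C. (root \<sigma>, last h) \<in> obsrel M ob})"
        unfolding G_def kd using True fC by (simp add: ffilter_Abs fimage_Abs root_KT)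
      have "{KT M k h' ?r' |h'. is_history M h' \<and> hist_equiv M ?r' j h' h}
         = (\<lambda>\<sigma>. UD M k \<sigma> ob a) ` {\<sigma>\<in>?C. (root \<sigma>, last h) \<in> obsrel M ob}"
      proof (intro set_eqI iffI)
        fix t assume "t \<in> {KT M k h' ?r' |h'. is_history M h' \<and> hist_equiv M ?r' j h' h}"
        then obtain h' where t: "t = KT M k h' ?r'" and hh: "is_history M h'"
          and he: "hist_equiv M ?r' j h' h" by blast
        have lh: "length h' = length h" using he by (simp add: hist_equiv_def)
        have he2: "hist_equiv M r a h' h" "(last h', last h) \<in> obsrel M ob"
          using hist_equiv_a[OF lh Suc.prems, of M r ob a] he True by simp_all
        have t2: "t = UD M k (KT M k h' r) ob a" using t Suc.IH lh Suc.prems by simp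
        have "KT M k h' r \<in> {\<sigma>\<in>?C. (root \<sigma>, last h) \<in> obsrel M ob}"
          using hh he2 True root_KT[of M k h' r] by auto
        then show "t \<in> (\<lambda>\<sigma>. UD M k \<sigma> ob a) ` {\<sigma>\<in>?C. (root \<sigma>, last h) \<in> obsrel M ob}"
          using t2 by (rule rev_image_eqI)
      next
        fix t assume "t \<in> (\<lambda>\<sigma>. UD M k \<sigma> ob a) ` {\<sigma>\<in>?C. (root \<sigma>, last h) \<in> obsrel M ob}"
        then obtain \<sigma> where t: "t = UD M k \<sigma> ob a" and sC: "\<sigma> \<in> ?C"
          and ro: "(root \<sigma>, last h) \<in> obsrel M ob" by blast
        from sC obtain h' where sg: "\<sigma> = KT M k h' r" and hh: "is_history M h'"
          and he: "hist_equiv M r j h' h" by blast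
        have lh: "length h' = length h" using he by (simp add: hist_equiv_def)
        have he2: "hist_equiv M ?r' j h' h"
          using hist_equiv_a[OF lh Suc.prems, of M r ob a] he True ro sg root_KT[of M k h' r] by simp
        have "t = KT M k h' ?r'" using t sg Suc.IH lh Suc.prems by simp
        then show "t \<in> {KT M k h' ?r' |h'. is_history M h' \<and> hist_equiv M ?r' j h' h}"
          using hh he2 by blast
      qed
      then show ?thesis unfolding F_def G by (simp only:)
    next
      case False
      have G: "G j = Abs_fset ((\<lambda>\<sigma>. UD M k \<sigma> ob a) ` ?C)"
        unfolding G_def kd using False fC by (simp add: fimage_Abs)
      have "{KT M k h' ?r' |h'. is_history M h' \<and> hist_equiv M ?r' j h' h}
         = (\<lambda>\<sigma>. UD M k \<sigma> ob a) ` ?C"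
      proof (intro set_eqI iffI)
        fix t assume "t \<in> {KT M k h' ?r' |h'. is_history M h' \<and> hist_equiv M ?r' j h' h}"
        then obtain h' where t: "t = KT M k h' ?r'" and hh: "is_history M h'"
          and he: "hist_equiv M ?r' j h' h" by blast
        have lh: "length h' = length h" using he by (simp add: hist_equiv_def)
        have he2: "hist_equiv M r j h' h" using he False hist_equiv_other by metis
        have t2: "t = UD M k (KT M k h' r) ob a" using t Suc.IH lh Suc.prems by simp
        have "KT M k h' r \<in> ?C" using hh he2 by auto
        then show "t \<in> (\<lambda>\<sigma>. UD M k \<sigma> ob a) ` ?C"
          using t2 by (rule rev_image_eqI)
      next
        fix t assume "t \<in> (\<lambda>\<sigma>. UD M k \<sigma> ob a) ` ?C"
        then obtain \<sigma> where t: "t = UD M k \<sigma> ob a" and sC: "\<sigma> \<in> ?C" by blast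
        from sC obtain h' where sg: "\<sigma> = KT M k h' r" and hh: "is_history M h'"
          and he: "hist_equiv M r j h' h" by blast
        have lh: "length h' = length h" using he by (simp add: hist_equiv_def)
        have he2: "hist_equiv M ?r' j h' h" using he False hist_equiv_other by metis
        have "t = KT M k h' ?r'" using t sg Suc.IH lh Suc.prems by simp
        then show "t \<in> {KT M k h' ?r' |h'. is_history M h' \<and> hist_equiv M ?r' j h' h}"
          using hh he2 by blast
      qed
      then show ?thesis unfolding F_def G by (simp only:)
    qed
  qed
  have mp: "map F [0..<nagents M] = map G [0..<nagents M]"
    by (rule map_cong[OF refl]) (simp add: per)
  have L: "KT M (Suc k) h ?r' = Node (last h) (map F [0..<nagents M])"
    unfolding F_def by (simp only: KT.simps(2))
  have R: "UD M (Suc k) (KT M (Suc k) h r) ob a = Node (last h) (map G [0..<nagents M])"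
    unfolding G_def by (simp only: UD.simps(2) root_KT)
  show ?case unfolding L R mp ..
qed

theorem mainTheorem5:
  fixes M :: "('s, 'o) mamodel" and h :: "'s list" and s :: 's
    and r :: "'o rectuple" and a :: nat and ob :: 'o and k :: nat
  assumes "wf_model M"
    and "is_history M (h @ [s])" and "h \<noteq> []"
    and "valid_rectuple M r"
    and "tuple_stops_at M r h"
    and "a < nagents M" and "ob \<in> Obs M"
  shows "KT M k (h @ [s]) r = UT M k (KT M k h r) s (obs_vec M h r)
    \<and> KT M k h (rec_snoc r ob (length h - 1) a) = UD M k (KT M k h r) ob a"
proof
  show "KT M k (h @ [s]) r = UT M k (KT M k h r) s (obs_vec M h r)"
    using part1[OF assms(1) assms(3) assms(2) assms(5)] .
  have "finite (St M)" using assms(1) by (simp add: wf_model_def)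
  moreover have "length h = Suc (length h - 1)" using assms(3) by simp
  ultimately show "KT M k h (rec_snoc r ob (length h - 1) a) = UD M k (KT M k h r) ob a"
    by (rule part2)
qed

end
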